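(* Consider Algorithm iR2N (described in the context) and suppose (A1), (A2), (A3), (A4) and (A6) hold. Define $$\sigma_{\mathrm{succ}}=\max\left(\frac{\theta_1\theta_2^2(L+\kappa_B+2\kappa_h+4\kappa_f+2\kappa_\nabla)}{(1-\theta_1)(1-\hat\eta_2)},\ \lambda^{-1}\right)>0.$$ If at iteration $k$ one has $s_k\neq 0$ and $\sigma_k\ge\sigma_{\mathrm{succ}}$, then $\hat\rho_k\ge\hat\eta_2$, i.e., iteration $k$ is very successful.
   Context: Setting. $f:\mathbb{R}^n\to\mathbb{R}$ is continuously differentiable, $h:\mathbb{R}^n\to\mathbb{R}\cup\{+\infty\}$ is proper and lower semicontinuous; the problem is $\min_x f(x)+h(x)$. $\|\cdot\|$ is the Euclidean norm (spectral norm for matrices). For each $x$, approximations $\hat f(x)\in\mathbb{R}$ of $f(x)$ and $\hat\nabla f(x)\in\mathbb{R}^n$ of $\nabla f(x)$ are available. For each $x$, $\psi(\cdot;x):\mathbb{R}^n\to\mathbb{R}\cup\{+\infty\}$ is proper, lsc, satisfies $\psi(0;x)=h(x)$ and $\partial\psi(0;x)\subseteq\partial h(x)$ ($\partial$ = limiting subdifferential), and is uniformly prox-bounded: there is $\lambda>0$ such that for every $x$ and every $0<\lambda'<\lambda$, $w\mapsto\psi(w;x)+\tfrac{1}{2\lambda'}\|w\|^2$ is bounded below. Models: $\varphi_{\mathrm{cp}}(s;x)=\hat f(x)+\hat\nabla f(x)^Ts$; $m_{\mathrm{cp}}(s;x,\nu^{-1})=\varphi_{\mathrm{cp}}(s;x)+\tfrac12\nu^{-1}\|s\|^2+\psi(s;x)$;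 for a symmetric $B(x)\in\mathbb{R}^{n\times n}$, $\varphi(s;x)=\hat f(x)+\hat\nabla f(x)^Ts+\tfrac12 s^TB(x)s$ and $m(s;x,\sigma)=\varphi(s;x)+\tfrac12\sigma\|s\|^2+\psi(s;x)$. Algorithm iR2N. Constants: $\kappa_f,\kappa_\nabla>0$, $0<\gamma_3\le 1<\gamma_1\le\gamma_2$, $0<\hat\eta_1\le\hat\eta_2<1$, $0<\theta_1<1<\theta_2$, $\sigma_{\min}>4\kappa_f\theta_1\theta_2^2/(\hat\eta_1(1-\theta_1))$, $\sigma_0\ge\sigma_{\min}$, $x_0\in\mathbb{R}^n$. At iteration $k=0,1,\dots$: choose symmetric $B_k=B(x_k)$; set $\nu_k=\theta_1/(\|B_k\|+\sigma_k)$; compute $\hat s_{k,\mathrm{cp}}$ with $m_{\mathrm{cp}}(\hat s_{k,\mathrm{cp}};x_k,\nu_k^{-1})\le m_{\mathrm{cp}}(0;x_k,\nu_k^{-1})$ (an approximate minimizer of $m_{\mathrm{cp}}(\cdot;x_k,\nu_k^{-1})$ obtained by a descent procedure from $s=0$) and set $\hat\xi_{k,\mathrm{cp}}=(\varphi_{\mathrm{cp}}+\psi)(0;x_k)-(\varphi_{\mathrm{cp}}+\psi)(\hat s_{k,\mathrm{cp}};x_k)$; compute $s_k$ with $m(s_k;x_k,\sigma_k)\le m(\hat s_{k,\mathrm{cp}};x_k,\sigma_k)$; if $\|s_k\|>\theta_2\|\hat s_{k,\mathrm{cp}}\|$, reset $s_k=\hat s_{k,\mathrm{cp}}$ (these computations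 are repeated with refined $\hat f,\hat\nabla f$ until (A6) holds). Compute $$\hat\rho_k=\frac{\hat f(x_k)+h(x_k)-\hat f(x_k+s_k)-h(x_k+s_k)}{\varphi(0;x_k)+\psi(0;x_k)-\varphi(s_k;x_k)-\psi(s_k;x_k)},$$ where $\varphi(\cdot;x_k)$ uses $B_k$. If $\hat\rho_k\ge\hat\eta_1$ (successful) set $x_{k+1}=x_k+s_k$, else $x_{k+1}=x_k$. Choose $\sigma_{k+1}\in[\gamma_3\sigma_k,\sigma_k]$ if $\hat\rho_k\ge\hat\eta_2$ (very successful), $\sigma_{k+1}\in[\sigma_k,\gamma_1\sigma_k]$ if $\hat\eta_1\le\hat\rho_k<\hat\eta_2$, $\sigma_{k+1}\in[\gamma_1\sigma_k,\gamma_2\sigma_k]$ if $\hat\rho_k<\hat\eta_1$; then reset $\sigma_{k+1}=\max(\sigma_{k+1},\sigma_{\min})$. Assumptions. (A1) $|f(x+s)-f(x)-\nabla f(x)^Ts|\le\tfrac12L\|s\|^2$ for all $x,s$, for some $L\ge0$. (A2) $\|B_k\|\le\kappa_B$ for all $k$, for some $\kappa_B>0$. (A3) $|\psi(s;x)-h(x+s)|\le\kappa_h\|s\|^2$ for all $x,s$, for some $\kappa_h>0$. (A4) For all $k$, $\varphi(0;x_k)+\psi(0;x_k)-(\varphi(s_k;x_k)+\psi(s_k;x_k))\ge(1-\theta_1)\hat\xi_{k,\mathrm{cp}}$. (A6) For all $k$: $|f(x_k)-\hat f(x_k)|\le\kappa_f\|s_k\|^2$, $|f(x_k+s_k)-\hat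 f(x_k+s_k)|\le\kappa_f\|s_k\|^2$, $\|\nabla f(x_k)-\hat\nabla f(x_k)\|\le\kappa_\nabla\|s_k\|$. *)

theory Defs
  imports "HOL-Analysis.Analysis"
begin

(* Extended-real valued functions R^n -> R \<union> {+\<infinity>} are modelled as maps into ereal
   that never take the value -\<infinity>. *)

definition proper_fun :: "('a \<Rightarrow> ereal) \<Rightarrow> bool" where
  "proper_fun g \<longleftrightarrow> (\<forall>x. g x \<noteq> -\<infinity>) \<and> (\<exists>x. g x \<noteq> \<infinity>)"

definition lsc_fun :: "('a::topological_space \<Rightarrow> ereal) \<Rightarrow> bool" where
  "lsc_fun g \<longleftrightarrow> (\<forall>x. g x \<le> Liminf (at x) g)"

(* Frechet (regular) subdifferential: v such that
   liminf_{y -> x, y \<noteq> x} (g y - g x - v.(y - x)) / |y - x| \<ge> 0, at points where g x is finite *)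
definition frechet_subdiff :: "('a::euclidean_space \<Rightarrow> ereal) \<Rightarrow> 'a \<Rightarrow> 'a set" where
  "frechet_subdiff g x = {v. \<bar>g x\<bar> \<noteq> \<infinity> \<and>
     (\<forall>e>0. \<exists>d>0. \<forall>y. norm (y - x) < d \<longrightarrow>
        g x + ereal (v \<bullet> (y - x) - e * norm (y - x)) \<le> g y)}"

definition limiting_subdiff :: "('a::euclidean_space \<Rightarrow> ereal) \<Rightarrow> 'a \<Rightarrow> 'a set" where
  "limiting_subdiff g x = {v. \<exists>xs vs. xs \<longlonglongrightarrow> x \<and> (\<lambda>j. g (xs j)) \<longlonglongrightarrow> g x \<and>
      (\<forall>j. vs j \<in> frechet_subdiff g (xs j)) \<and> vs \<longlonglongrightarrow> v}"

definition specnorm :: "real^'n^'n \<Rightarrow> real" where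
  "specnorm A = onorm (\<lambda>v. A *v v)"

definition phi_cp :: "real \<Rightarrow> real^'n \<Rightarrow> real^'n \<Rightarrow> real" where
  "phi_cp fx gx s = fx + gx \<bullet> s"

definition phi_q :: "real \<Rightarrow> real^'n \<Rightarrow> real^'n^'n \<Rightarrow> real^'n \<Rightarrow> real" where
  "phi_q fx gx Bx s = fx + gx \<bullet> s + 1/2 * (s \<bullet> (Bx *v s))"

definition m_cp :: "real \<Rightarrow> real^'n \<Rightarrow> (real^'n \<Rightarrow> ereal) \<Rightarrow> real \<Rightarrow> real^'n \<Rightarrow> ereal" where
  "m_cp fx gx psix nuinv s = ereal (phi_cp fx gx s + 1/2 * nuinv * (norm s)^2) + psix s"

definition m_q :: "real \<Rightarrow> real^'n \<Rightarrow> real^'n^'n \<Rightarrow> (real^'n \<Rightarrow> ereal) \<Rightarrow> real \<Rightarrow> real^'n \<Rightarrow> ereal" where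
  "m_q fx gx Bx psix sg s = ereal (phi_q fx gx Bx s + 1/2 * sg * (norm s)^2) + psix s"

definition xi_cp :: "real \<Rightarrow> real^'n \<Rightarrow> (real^'n \<Rightarrow> ereal) \<Rightarrow> real^'n \<Rightarrow> ereal" where
  "xi_cp fx gx psix scp = (ereal (phi_cp fx gx 0) + psix 0) - (ereal (phi_cp fx gx scp) + psix scp)"

definition model_decr :: "real \<Rightarrow> real^'n \<Rightarrow> real^'n^'n \<Rightarrow> (real^'n \<Rightarrow> ereal) \<Rightarrow> real^'n \<Rightarrow> ereal" where
  "model_decr fx gx Bx psix s = (ereal (phi_q fx gx Bx 0) + psix 0) - (ereal (phi_q fx gx Bx s) + psix s)"

(* The ratio rho_hat.  Numerator and denominator are the extended-real quantities of the paper,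
   converted to reals (they are finite under (A3)). *)
definition rho_hat :: "real \<Rightarrow> real \<Rightarrow> (real^'n \<Rightarrow> ereal) \<Rightarrow> real^'n \<Rightarrow>
     real \<Rightarrow> real^'n \<Rightarrow> real^'n^'n \<Rightarrow> (real^'n \<Rightarrow> ereal) \<Rightarrow> real^'n \<Rightarrow> real" where
  "rho_hat fx fxs h x   fx' gx Bx psix s =
     real_of_ereal ((ereal fx + h x) - (ereal fxs + h (x + s))) /
     real_of_ereal (model_decr fx' gx Bx psix s)"

definition iR2N_params :: "real \<Rightarrow> real \<Rightarrow> real \<Rightarrow> real \<Rightarrow> real \<Rightarrow> real \<Rightarrow> real \<Rightarrow> real
     \<Rightarrow> real \<Rightarrow> real \<Rightarrow> bool" where
  "iR2N_params kf kg g3 g1 g2 eta1 eta2 th1 th2 smin \<longleftrightarrow>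
     kf > 0 \<and> kg > 0 \<and> 0 < g3 \<and> g3 \<le> 1 \<and> 1 < g1 \<and> g1 \<le> g2 \<and>
     0 < eta1 \<and> eta1 \<le> eta2 \<and> eta2 < 1 \<and> 0 < th1 \<and> th1 < 1 \<and> 1 < th2 \<and>
     smin > 4 * kf * th1 * th2^2 / (eta1 * (1 - th1))"

(* The sequences generated by iR2N.  At iteration k the (possibly refined) approximations
   used are fhat k and ghat k; scp k is the Cauchy-type step, s k the final step. *)
definition iR2N_run ::
  "real \<Rightarrow> real \<Rightarrow> real \<Rightarrow> real \<Rightarrow> real \<Rightarrow> real \<Rightarrow> real \<Rightarrow> real \<Rightarrow>
   (real^'n \<Rightarrow> ereal) \<Rightarrow> (real^'n \<Rightarrow> real^'n \<Rightarrow> ereal) \<Rightarrow>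
   (nat \<Rightarrow> real^'n \<Rightarrow> real) \<Rightarrow> (nat \<Rightarrow> real^'n \<Rightarrow> real^'n) \<Rightarrow>
   (nat \<Rightarrow> real^'n^'n) \<Rightarrow> (nat \<Rightarrow> real) \<Rightarrow> (nat \<Rightarrow> real^'n) \<Rightarrow>
   (nat \<Rightarrow> real^'n) \<Rightarrow> (nat \<Rightarrow> real^'n) \<Rightarrow> bool" where
  "iR2N_run g3 g1 g2 eta1 eta2 th1 th2 smin h psi fhat ghat B sg x scp s \<longleftrightarrow>
     sg 0 \<ge> smin \<and>
     (\<forall>k. let fx = fhat k (x k); gx = ghat k (x k); psix = (\<lambda>w. psi w (x k));
             nu = th1 / (specnorm (B k) + sg k);
             rho = rho_hat (fhat k (x k)) (fhat k (x k + s k)) h (x k) fx gx (B k) psix (s k)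
         in transpose (B k) = B k \<and>
            m_cp fx gx psix (1 / nu) (scp k) \<le> m_cp fx gx psix (1 / nu) 0 \<and>
            (s k = scp k \<or>
              (m_q fx gx (B k) psix (sg k) (s k) \<le> m_q fx gx (B k) psix (sg k) (scp k) \<and>
               norm (s k) \<le> th2 * norm (scp k))) \<and>
            x (Suc k) = (if rho \<ge> eta1 then x k + s k else x k) \<and>
            (\<exists>sig'. (if rho \<ge> eta2 then g3 * sg k \<le> sig' \<and> sig' \<le> sg k
                     else if rho \<ge> eta1 then sg k \<le> sig' \<and> sig' \<le> g1 * sg k
                     else g1 * sg k \<le> sig' \<and> sig' \<le> g2 * sg k) \<and>
                    sg (Suc k) = max sig' smin))"

end

theory Submission
  imports Defs
begin

theorem lemma3p3:
  fixes f :: "real^'n \<Rightarrow> real" and gradf :: "real^'n \<Rightarrow> real^'n"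
    and h :: "real^'n \<Rightarrow> ereal" and psi :: "real^'n \<Rightarrow> real^'n \<Rightarrow> ereal"
    and lam :: real
    and kf kg g3 g1 g2 eta1 eta2 th1 th2 smin L kB kh :: real
    and fhat :: "nat \<Rightarrow> real^'n \<Rightarrow> real" and ghat :: "nat \<Rightarrow> real^'n \<Rightarrow> real^'n"
    and B :: "nat \<Rightarrow> real^'n^'n" and sg :: "nat \<Rightarrow> real"
    and x scp s :: "nat \<Rightarrow> real^'n" and k :: nat
  assumes f_C1: "\<forall>y. (f has_derivative (\<lambda>v. gradf y \<bullet> v)) (at y)" "continuous_on UNIV gradf"
    and h_proper: "proper_fun h" and h_lsc: "lsc_fun h"
    and psi_proper: "\<forall>y. proper_fun (\<lambda>w. psi w y)"
    and psi_lsc: "\<forall>y. lsc_fun (\<lambda>w. psi w y)"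
    and psi_0: "\<forall>y. psi 0 y = h y"
    and psi_subdiff: "\<forall>y. limiting_subdiff (\<lambda>w. psi w y) 0 \<subseteq> limiting_subdiff h y"
    and prox_bdd: "lam > 0" "\<forall>y lam'. 0 < lam' \<and> lam' < lam \<longrightarrow>
                      (\<exists>c::real. \<forall>w. ereal c \<le> psi w y + ereal ((norm w)^2 / (2 * lam')))"
    and params: "iR2N_params kf kg g3 g1 g2 eta1 eta2 th1 th2 smin"
    and run: "iR2N_run g3 g1 g2 eta1 eta2 th1 th2 smin h psi fhat ghat B sg x scp s"
    and A1: "L \<ge> 0" "\<forall>y v. \<bar>f (y + v) - f y - gradf y \<bullet> v\<bar> \<le> 1/2 * L * (norm v)^2"
    and A2: "kB > 0" "\<forall>j. specnorm (B j) \<le> kB"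
    and A3: "kh > 0" "\<forall>y v. \<bar>psi v y - h (y + v)\<bar> \<le> ereal (kh * (norm v)^2)"
    and A4: "\<forall>j. model_decr (fhat j (x j)) (ghat j (x j)) (B j) (\<lambda>w. psi w (x j)) (s j)
                 \<ge> ereal (1 - th1) * xi_cp (fhat j (x j)) (ghat j (x j)) (\<lambda>w. psi w (x j)) (scp j)"
    and A6: "\<forall>j. \<bar>f (x j) - fhat j (x j)\<bar> \<le> kf * (norm (s j))^2 \<and>
                 \<bar>f (x j + s j) - fhat j (x j + s j)\<bar> \<le> kf * (norm (s j))^2 \<and>
                 norm (gradf (x j) - ghat j (x j)) \<le> kg * norm (s j)"
    and s_nz: "s k \<noteq> 0"
    and sigma_big: "sg k \<ge> max (th1 * th2^2 * (L + kB + 2 * kh + 4 * kf + 2 * kg)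
                                    / ((1 - th1) * (1 - eta2))) (1 / lam)"
  shows "rho_hat (fhat k (x k)) (fhat k (x k + s k)) h (x k)
           (fhat k (x k)) (ghat k (x k)) (B k) (\<lambda>w. psi w (x k)) (s k) \<ge> eta2"
proof -
  have hfin: "\<bar>h y\<bar> \<noteq> \<infinity>" for y
  proof -
    have "\<bar>psi 0 y - h (y + 0)\<bar> \<le> ereal (kh * (norm (0::real^'n))^2)" using A3(2) by blast
    then show ?thesis using psi_0 by (auto split: if_splits)
  qed
  have pfin: "\<bar>psi v y\<bar> \<noteq> \<infinity>" for v y
  proof -
    obtain r where r: "h (y + v) = ereal r" using hfin[of "y+v"] by (cases "h (y+v)") auto
    have "\<bar>psi v y - h (y + v)\<bar> \<le> ereal (kh * (norm v)^2)" using A3(2) by blast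
    then show ?thesis using r by (cases "psi v y") auto
  qed
  define xk where "xk = x k"
  define sk where "sk = s k"
  define ck where "ck = scp k"
  define fx where "fx = fhat k xk"
  define fxs where "fxs = fhat k (xk + sk)"
  define gx where "gx = ghat k xk"
  define Bk where "Bk = B k"
  define sgk where "sgk = sg k"
  define nb where "nb = specnorm Bk"
  obtain a where ha: "h xk = ereal a" using hfin[of xk] by (cases "h xk") auto
  obtain b where hb: "h (xk + sk) = ereal b" using hfin[of "xk+sk"] by (cases "h (xk+sk)") auto
  obtain ps where hps: "psi sk xk = ereal ps" using pfin[of sk xk] by (cases "psi sk xk") auto
  obtain pc where hpc: "psi ck xk = ereal pc" using pfin[of ck xk] by (cases "psi ck xk") auto
  have p0: "psi 0 xk = ereal a" using psi_0 ha by simp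
  have bl: "bounded_linear (\<lambda>v. Bk *v v)" by simp
  have nb0: "nb \<ge> 0" unfolding nb_def specnorm_def using onorm_pos_le[OF bl] .
  have nbB: "norm (Bk *v sk) \<le> nb * norm sk" unfolding nb_def specnorm_def using onorm[OF bl] .
  have nbk: "nb \<le> kB" using A2(2) unfolding nb_def Bk_def by blast
  have pr: "kf > 0" "kg > 0" "0 < eta1" "eta1 \<le> eta2" "eta2 < 1" "0 < th1" "th1 < 1" "1 < th2"
    using params unfolding iR2N_params_def by auto
  have lam1: "1 / lam > 0" using prox_bdd(1) by simp
  have sgpos: "sgk > 0" using sigma_big lam1 unfolding sgk_def by linarith
  have sgC: "sgk \<ge> th1 * th2^2 * (L + kB + 2 * kh + 4 * kf + 2 * kg) / ((1 - th1) * (1 - eta2))"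
    using sigma_big unfolding sgk_def by linarith
  from run have R: "m_cp fx gx (\<lambda>w. psi w xk) (1 / (th1 / (nb + sgk))) ck
        \<le> m_cp fx gx (\<lambda>w. psi w xk) (1 / (th1 / (nb + sgk))) 0 \<and>
      (sk = ck \<or> (m_q fx gx Bk (\<lambda>w. psi w xk) sgk sk \<le> m_q fx gx Bk (\<lambda>w. psi w xk) sgk ck \<and>
               norm sk \<le> th2 * norm ck))"
    unfolding iR2N_run_def Let_def xk_def sk_def ck_def fx_def gx_def Bk_def sgk_def nb_def
    by blast
  define nuinv where "nuinv = (nb + sgk) / th1"
  have nuinv: "1 / (th1 / (nb + sgk)) = nuinv" unfolding nuinv_def by simp
  have cp: "fx + gx \<bullet> ck + 1/2 * nuinv * (norm ck)^2 + pc \<le> fx + a"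
    using R[THEN conjunct1] unfolding nuinv m_cp_def phi_cp_def using hpc p0 by simp
  have nuge: "nuinv \<ge> sgk / th1" unfolding nuinv_def using nb0 pr
    by (simp add: divide_right_mono)
  have sck: "norm sk \<le> th2 * norm ck"
  proof (cases "sk = ck")
    case True then show ?thesis using pr by (simp add: mult_le_cancel_right1)
  next
    case False then show ?thesis using R by blast
  qed
  have A4k: "ereal ((fx + a) - (fx + gx \<bullet> sk + 1/2 * (sk \<bullet> (Bk *v sk)) + ps))
      \<ge> ereal (1 - th1) * ereal ((fx + a) - (fx + gx \<bullet> ck + pc))"
    using A4[rule_format, of k] hps hpc p0
    unfolding model_decr_def xi_cp_def phi_q_def phi_cp_def xk_def[symmetric] sk_def[symmetric]
      ck_def[symmetric] fx_def[symmetric] gx_def[symmetric] Bk_def[symmetric]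
    by simp
  define D where "D = - (gx \<bullet> sk + 1/2 * (sk \<bullet> (Bk *v sk))) + a - ps"
  define xi where "xi = a - (gx \<bullet> ck + pc)"
  have Dxi: "D \<ge> (1 - th1) * xi"
  proof -
    have "(fx + a) - (fx + gx \<bullet> sk + 1/2 * (sk \<bullet> (Bk *v sk)) + ps)
      \<ge> (1 - th1) * ((fx + a) - (fx + gx \<bullet> ck + pc))" using A4k by simp
    then show ?thesis unfolding D_def xi_def by argo
  qed
  have xige: "xi \<ge> 1/2 * nuinv * (norm ck)^2" using cp unfolding xi_def by simp
  define S where "S = (norm sk)^2"
  have Spos: "S > 0" unfolding S_def sk_def using s_nz by simp
  have Sle: "S \<le> th2^2 * (norm ck)^2" unfolding S_def using sck
    by (metis norm_ge_zero power_mono power_mult_distrib)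
  have ck2: "(norm ck)^2 \<ge> S / th2^2" using Sle pr by (simp add: field_simps)
  have xige2: "xi \<ge> 1/2 * (sgk / th1) * (S / th2^2)"
  proof -
    have "1/2 * (sgk / th1) * (S / th2^2) \<le> 1/2 * nuinv * (norm ck)^2"
      using nuge ck2 sgpos pr Spos order_trans[OF _ nuge, of 0]
      by (intro mult_mono) (auto simp: divide_simps)
    then show ?thesis using xige by linarith
  qed
  define K where "K = (1 - th1) * sgk / (2 * th1 * th2^2)"
  have Kdef: "(1 - th1) * (1/2 * (sgk / th1) * (S / th2^2)) = K * S" unfolding K_def
    using pr by (simp add: field_simps)
  have DK: "D \<ge> K * S"
  proof -
    have "(1 - th1) * xi \<ge> (1 - th1) * (1/2 * (sgk / th1) * (S / th2^2))"
      using xige2 pr by (intro mult_left_mono) auto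
    then show ?thesis using Dxi Kdef by linarith
  qed
  have Kpos: "K > 0" unfolding K_def using pr sgpos by simp
  have Dpos: "D > 0" using DK Kpos Spos by (smt (verit) mult_pos_pos)
  define C where "C = L + kB + 2 * kh + 4 * kf + 2 * kg"
  have Cpos: "C > 0" unfolding C_def using A1(1) A2(1) A3(1) pr by simp
  define N where "N = fx + a - fxs - b"
  have e1: "\<bar>f xk - fx\<bar> \<le> kf * S" and e2: "\<bar>f (xk + sk) - fxs\<bar> \<le> kf * S"
    and e3: "norm (gradf xk - gx) \<le> kg * norm sk"
    using A6[rule_format, of k] unfolding S_def xk_def sk_def fx_def fxs_def gx_def by auto
  have e4: "\<bar>f (xk + sk) - f xk - gradf xk \<bullet> sk\<bar> \<le> 1/2 * L * S"
    using A1(2) unfolding S_def by blast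
  have e5: "\<bar>ps - b\<bar> \<le> kh * S"
  proof -
    have "\<bar>psi sk xk - h (xk + sk)\<bar> \<le> ereal (kh * (norm sk)^2)" using A3(2) by blast
    then show ?thesis using hps hb unfolding S_def by simp
  qed
  have e6: "\<bar>(gradf xk - gx) \<bullet> sk\<bar> \<le> kg * S"
  proof -
    have "\<bar>(gradf xk - gx) \<bullet> sk\<bar> \<le> norm (gradf xk - gx) * norm sk" by (rule Cauchy_Schwarz_ineq2)
    also have "\<dots> \<le> kg * norm sk * norm sk" using e3 by (intro mult_right_mono) auto
    finally show ?thesis unfolding S_def by (simp add: power2_eq_square)
  qed
  have e7: "\<bar>sk \<bullet> (Bk *v sk)\<bar> \<le> kB * S"
  proof -
    have "\<bar>sk \<bullet> (Bk *v sk)\<bar> \<le> norm sk * norm (Bk *v sk)" by (rule Cauchy_Schwarz_ineq2)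
    also have "\<dots> \<le> norm sk * (nb * norm sk)" using nbB by (intro mult_left_mono) auto
    also have "\<dots> \<le> norm sk * (kB * norm sk)" using nbk by (intro mult_left_mono mult_right_mono) auto
    finally show ?thesis unfolding S_def by (simp add: power2_eq_square mult_ac)
  qed
  have inner_split: "gradf xk \<bullet> sk = gx \<bullet> sk + (gradf xk - gx) \<bullet> sk" by (simp add: inner_diff_left)
  have DN: "D - N \<le> 1/2 * C * S"
  proof -
    note q = e1[unfolded abs_le_iff] e2[unfolded abs_le_iff] e4[unfolded abs_le_iff]
      e5[unfolded abs_le_iff] e6[unfolded abs_le_iff] e7[unfolded abs_le_iff]
    have "D - N = - (gx \<bullet> sk) - 1/2 * (sk \<bullet> (Bk *v sk)) - ps - fx + fxs + b"
      unfolding D_def N_def by simp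
    then show ?thesis unfolding C_def using q inner_split by (simp only: distrib_left distrib_right) linarith
  qed
  have KC: "(1 - eta2) * K \<ge> 1/2 * C"
  proof -
    have "sgk \<ge> th1 * th2^2 * C / ((1 - th1) * (1 - eta2))" using sgC unfolding C_def .
    then have "sgk * ((1 - th1) * (1 - eta2)) \<ge> th1 * th2^2 * C" using pr
      by (simp add: pos_divide_le_eq)
    then show ?thesis unfolding K_def using pr by (simp add: field_simps)
  qed
  have "(1 - eta2) * D \<ge> (1 - eta2) * (K * S)" using DK pr by (intro mult_left_mono) auto
  moreover have "(1 - eta2) * (K * S) \<ge> 1/2 * C * S" using KC Spos
    by (metis mult.assoc mult_right_mono less_imp_le)
  ultimately have NeD: "N \<ge> eta2 * D" using DN by (simp add: algebra_simps)
  have rho: "rho_hat (fhat k (x k)) (fhat k (x k + s k)) h (x k)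
           (fhat k (x k)) (ghat k (x k)) (B k) (\<lambda>w. psi w (x k)) (s k) = N / D"
    unfolding rho_hat_def model_decr_def phi_q_def xk_def[symmetric] sk_def[symmetric]
      fx_def[symmetric] fxs_def[symmetric] gx_def[symmetric] Bk_def[symmetric]
    using ha hb hps p0 unfolding N_def D_def by (simp add: algebra_simps)
  show ?thesis unfolding rho using NeD Dpos by (simp add: pos_le_divide_eq)
qed

end
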